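(* Let $B>0$ and let $\phi\in L^2(\mathbb{R})$ be such that $\mathcal{A}\phi(x,0)\neq0$ for almost every $x\in(-2B,2B)$. Then for all even, real-valued $f,g\in L^2(\mathbb{R})$ that vanish almost everywhere outside $[-B,B]$, the following are equivalent: (1) $f=\pm g$; (2) $|\mathcal{V}_\phi f(x,\omega)|=|\mathcal{V}_\phi g(x,\omega)|$ for all $x,\omega\in\mathbb{R}$.
   Context: For $f,\phi\in L^2(\mathbb{R})$ the short-time Fourier transform is $\mathcal{V}_\phi f(x,\omega)=\int_{\mathbb{R}} f(t)\overline{\phi(t-x)}e^{-2\pi i t\omega}\,dt$, and the ambiguity function of $f\in L^2(\mathbb{R})$ is $\mathcal{A}f(x,\omega):=e^{\pi i x\omega}\mathcal{V}_f f(x,\omega)$, for $x,\omega\in\mathbb{R}$. *)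

theory Defs
  imports "HOL-Analysis.Analysis"
begin

definition L2 :: "(real \<Rightarrow> complex) set" where
  "L2 = {f. f \<in> borel_measurable lborel \<and> integrable lborel (\<lambda>t. (norm (f t))\<^sup>2)}"

definition STFT :: "(real \<Rightarrow> complex) \<Rightarrow> (real \<Rightarrow> complex) \<Rightarrow> real \<Rightarrow> real \<Rightarrow> complex" where
  "STFT \<phi> f x \<omega> =
     (LINT t|lborel. f t * cnj (\<phi> (t - x)) * exp (- 2 * pi * \<i> * complex_of_real (t * \<omega>)))"

definition ambiguity :: "(real \<Rightarrow> complex) \<Rightarrow> real \<Rightarrow> real \<Rightarrow> complex" where
  "ambiguity f x \<omega> = exp (pi * \<i> * complex_of_real (x * \<omega>)) * STFT f f x \<omega>"

end

theory Submission
  imports Defs "HOL-Probability.Levy" "HOL-Computational_Algebra.Formal_Power_Series"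
begin

lemma integrable_mult_bdd:
  fixes u w :: "real \<Rightarrow> complex"
  assumes "integrable lborel u" "w \<in> borel_measurable borel" "\<And>t. norm (w t) \<le> 1"
  shows "integrable lborel (\<lambda>t. u t * w t)"
proof (rule Bochner_Integration.integrable_bound[OF assms(1)])
  show "(\<lambda>t. u t * w t) \<in> borel_measurable lborel" using assms by auto
  show "AE x in lborel. norm (u x * w x) \<le> norm (u x)"
    using assms(3) by (auto simp: norm_mult intro!: mult_left_le)
qed

lemma integrable_iexp_mult:
  fixes u :: "real \<Rightarrow> complex"
  assumes "integrable lborel u"
  shows "integrable lborel (\<lambda>t. u t * iexp (\<theta> * t))"
  by (rule integrable_mult_bdd[OF assms]) (auto simp: norm_exp_i_times)

lemma U_real:
  fixes v :: "real \<Rightarrow> real"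
  assumes int: "integrable lborel v"
    and ft: "\<And>\<theta>. (CLINT t|lborel. complex_of_real (v t) * iexp (\<theta> * t)) = 0"
  shows "AE t in lborel. v t = 0"
proof -
  have [measurable]: "v \<in> borel_measurable borel" using int by auto
  define vp where "vp t = max (v t) 0" for t
  define vn where "vn t = max (- v t) 0" for t
  have [measurable]: "vp \<in> borel_measurable borel" "vn \<in> borel_measurable borel"
    unfolding vp_def vn_def by measurable
  have ip: "integrable lborel vp" unfolding vp_def using int by (intro integrable_max) auto
  have iN: "integrable lborel vn" unfolding vn_def using int by (intro integrable_max) auto
  have ipc: "integrable lborel (\<lambda>t. complex_of_real (vp t))" using ip by simp
  have iNc: "integrable lborel (\<lambda>t. complex_of_real (vn t))" using iN by simp
  have vdec: "v t = vp t - vn t" for t unfolding vp_def vn_def by auto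
  have eqc: "(CLINT t|lborel. complex_of_real (vp t) * iexp (\<theta> * t)) =
        (CLINT t|lborel. complex_of_real (vn t) * iexp (\<theta> * t))" for \<theta>
  proof -
    have "0 = (CLINT t|lborel. complex_of_real (vp t) * iexp (\<theta> * t) - complex_of_real (vn t) * iexp (\<theta> * t))"
      using ft[of \<theta>] by (simp add: vdec algebra_simps)
    also have "\<dots> = (CLINT t|lborel. complex_of_real (vp t) * iexp (\<theta> * t)) - (CLINT t|lborel. complex_of_real (vn t) * iexp (\<theta> * t))"
      by (rule Bochner_Integration.integral_diff; rule integrable_iexp_mult; rule ipc iNc)
    finally show ?thesis by simp
  qed
  define c where "c = integral\<^sup>L lborel vp"
  have c2: "c = integral\<^sup>L lborel vn" using eqc[of 0] unfolding c_def by simp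
  have vpnn: "vp t \<ge> 0" "vn t \<ge> 0" for t unfolding vp_def vn_def by auto
  have cnn: "c \<ge> 0" unfolding c_def by (rule integral_nonneg_AE) (auto simp: vpnn)
  show ?thesis
  proof (cases "c = 0")
    case True
    have "AE t in lborel. vp t = 0" using True ip vpnn unfolding c_def
      by (subst integral_nonneg_eq_0_iff_AE[symmetric]) auto
    moreover have "AE t in lborel. vn t = 0" using True iN vpnn unfolding c2
      by (subst integral_nonneg_eq_0_iff_AE[symmetric]) auto
    ultimately show ?thesis by eventually_elim (simp add: vdec)
  next
    case False
    with cnn have cpos: "c > 0" by simp
    define M1 where "M1 = density lborel (\<lambda>t. ennreal (vp t / c))"
    define M2 where "M2 = density lborel (\<lambda>t. ennreal (vn t / c))"
    have rd1: "real_distribution M1"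
    proof -
      have "emeasure M1 UNIV = (\<integral>\<^sup>+ t. ennreal (vp t / c) \<partial>lborel)"
        unfolding M1_def by (subst emeasure_density) auto
      also have "\<dots> = ennreal (integral\<^sup>L lborel (\<lambda>t. vp t / c))"
        using ip cpos vpnn by (intro nn_integral_eq_integral) auto
      also have "\<dots> = 1" using cpos unfolding c_def by simp
      finally have "emeasure M1 UNIV = 1" .
      then have "prob_space M1" by (intro prob_spaceI) (simp add: M1_def)
      then show ?thesis unfolding real_distribution_def real_distribution_axioms_def
        by (simp add: M1_def)
    qed
    have rd2: "real_distribution M2"
    proof -
      have "emeasure M2 UNIV = (\<integral>\<^sup>+ t. ennreal (vn t / c) \<partial>lborel)"
        unfolding M2_def by (subst emeasure_density) auto
      also have "\<dots> = ennreal (integral\<^sup>L lborel (\<lambda>t. vn t / c))"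
        using iN cpos vpnn by (intro nn_integral_eq_integral) auto
      also have "\<dots> = 1" using cpos unfolding c2 by simp
      finally have "emeasure M2 UNIV = 1" .
      then have "prob_space M2" by (intro prob_spaceI) (simp add: M2_def)
      then show ?thesis unfolding real_distribution_def real_distribution_axioms_def
        by (simp add: M2_def)
    qed
    have ch1: "char M1 \<theta> = (CLINT t|lborel. complex_of_real (vp t) * iexp (\<theta> * t)) / c" for \<theta>
    proof -
      have "char M1 \<theta> = (CLINT t|lborel. (vp t / c) *\<^sub>R iexp (\<theta> * t))"
        unfolding char_def M1_def using cpos vpnn
        by (subst integral_density) auto
      also have "\<dots> = (CLINT t|lborel. complex_of_real (vp t) * iexp (\<theta> * t) / c)"
        by (simp add: scaleR_conv_of_real)
      finally show ?thesis by simp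
    qed
    have ch2: "char M2 \<theta> = (CLINT t|lborel. complex_of_real (vn t) * iexp (\<theta> * t)) / c" for \<theta>
    proof -
      have "char M2 \<theta> = (CLINT t|lborel. (vn t / c) *\<^sub>R iexp (\<theta> * t))"
        unfolding char_def M2_def using cpos vpnn
        by (subst integral_density) auto
      also have "\<dots> = (CLINT t|lborel. complex_of_real (vn t) * iexp (\<theta> * t) / c)"
        by (simp add: scaleR_conv_of_real)
      finally show ?thesis by simp
    qed
    have "M1 = M2" by (rule Levy_uniqueness[OF rd1 rd2]) (rule ext, simp only: ch1 ch2 eqc)
    have "AE t in lborel. vp t / c = vn t / c"
    proof (rule density_unique_real)
      show "integrable lborel (\<lambda>t. vp t / c)" "integrable lborel (\<lambda>t. vn t / c)" using ip iN by auto
      fix A :: "real set" assume A: "A \<in> sets lborel"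
      have "(\<integral>x \<in> A. vp x / c \<partial>lborel) = integral\<^sup>L M1 (indicator A :: real \<Rightarrow> real)"
        unfolding M1_def set_lebesgue_integral_def using A cpos vpnn
        by (subst integral_density) (auto simp: mult.commute)
      also have "\<dots> = integral\<^sup>L M2 (indicator A :: real \<Rightarrow> real)" using \<open>M1 = M2\<close> by simp
      also have "\<dots> = (\<integral>x \<in> A. vn x / c \<partial>lborel)"
        unfolding M2_def set_lebesgue_integral_def using A cpos vpnn
        by (subst integral_density) (auto simp: mult.commute)
      finally show "(\<integral>x \<in> A. vp x / c \<partial>lborel) = (\<integral>x \<in> A. vn x / c \<partial>lborel)" .
    qed
    then show ?thesis using cpos by (auto elim!: AE_mp intro!: AE_I2 simp: vdec)
  qed
qed

lemma iexp_cis: "iexp a = cis a" by (simp add: cis_conv_exp)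

lemma iexp_diff: "iexp (a - b) = iexp a * cnj (iexp b)"
  unfolding iexp_cis by (simp add: cis_cnj cis_mult)

lemma iexp_add: "iexp (a + b) = iexp a * iexp b"
  unfolding iexp_cis by (simp add: cis_mult)

lemma re_eq: "complex_of_real (Re z) = (z + cnj z) / 2" by (simp add: complex_eq_iff)
lemma im_eq: "complex_of_real (Im z) = (z - cnj z) / (2 * \<i>)" by (simp add: complex_eq_iff)

lemma iexp_neg: "iexp (- a) = cnj (iexp a)"
  unfolding iexp_cis by (simp add: cis_cnj)

lemma cnj_meas[measurable]: "(cnj :: complex \<Rightarrow> complex) \<in> borel_measurable borel"
  by (intro borel_measurable_continuous_onI continuous_intros)

lemma iexp_meas[measurable]: "iexp \<in> borel_measurable borel"
  by (intro borel_measurable_continuous_onI continuous_intros)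

lemma integral_refl_shift:
  fixes g :: "real \<Rightarrow> 'a::{banach,second_countable_topology}"
  shows "(\<integral>y. g (t - y) \<partial>lborel) = (\<integral>s. g s \<partial>lborel)"
  using lborel_integral_real_affine[of "-1" g t] by simp

lemma integrable_refl_shift:
  fixes g :: "real \<Rightarrow> 'a::{banach,second_countable_topology}"
  shows "integrable lborel (\<lambda>y. g (t - y)) \<longleftrightarrow> integrable lborel g"
  using lborel_integrable_real_affine_iff[of "-1" g t] by simp

lemma integral_shift:
  fixes g :: "real \<Rightarrow> 'a::{banach,second_countable_topology}"
  shows "(\<integral>y. g (y - t) \<partial>lborel) = (\<integral>s. g s \<partial>lborel)"
  using lborel_integral_real_affine[of "1" g "-t"] by simp

lemma integrable_shift:
  fixes g :: "real \<Rightarrow> 'a::{banach,second_countable_topology}"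
  shows "integrable lborel (\<lambda>y. g (y - t)) \<longleftrightarrow> integrable lborel g"
  using lborel_integrable_real_affine_iff[of "1" g "-t"] by simp

lemma integral_shift':
  fixes g :: "real \<Rightarrow> 'a::{banach,second_countable_topology}"
  shows "(\<integral>y. g (y + t) \<partial>lborel) = (\<integral>s. g s \<partial>lborel)"
  using lborel_integral_real_affine[of "1" g "t"] by (simp add: add.commute)

lemma integrable_shift':
  fixes g :: "real \<Rightarrow> 'a::{banach,second_countable_topology}"
  shows "integrable lborel (\<lambda>y. g (y + t)) \<longleftrightarrow> integrable lborel g"
  using lborel_integrable_real_affine_iff[of "1" g "t"] by (simp add: add.commute)

definition FTc :: "(real \<Rightarrow> complex) \<Rightarrow> real \<Rightarrow> complex" where
  "FTc u \<theta> = (CLINT t|lborel. u t * iexp (\<theta> * t))"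

definition Rac :: "(real \<Rightarrow> complex) \<Rightarrow> real \<Rightarrow> complex" where
  "Rac h y = (CLINT t|lborel. h t * cnj (h (t - y)))"

lemma AC:
  fixes h :: "real \<Rightarrow> complex"
  assumes h: "integrable lborel h"
  shows "integrable lborel (Rac h)" "FTc (Rac h) \<theta> = FTc h \<theta> * cnj (FTc h \<theta>)"
proof -
  have [measurable]: "h \<in> borel_measurable borel" using h by auto
  define F where "F = (\<lambda>\<theta> t y. h t * cnj (h (t - y)) * iexp (\<theta> * y))"
  have Fm: "(\<lambda>(t,y). F \<theta> t y) \<in> borel_measurable (lborel \<Otimes>\<^sub>M lborel)" for \<theta> unfolding F_def by measurable
  have nh: "integrable lborel (\<lambda>t. norm (h t))" using h by auto
  have inner_norm: "(\<integral>y. norm (F \<theta> t y) \<partial>lborel) = norm (h t) * (\<integral>s. norm (h s) \<partial>lborel)" for t \<theta>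
  proof -
    have "(\<integral>y. norm (F \<theta> t y) \<partial>lborel) = (\<integral>y. norm (h t) * norm (h (t - y)) \<partial>lborel)"
      unfolding F_def by (simp add: norm_mult norm_exp_i_times)
    also have "\<dots> = norm (h t) * (\<integral>y. norm (h (t - y)) \<partial>lborel)" by simp
    also have "\<dots> = norm (h t) * (\<integral>s. norm (h s) \<partial>lborel)"
      by (subst integral_refl_shift[of "\<lambda>s. norm (h s)"]) simp
    finally show ?thesis .
  qed
  have integ2: "integrable lborel (\<lambda>y. F \<theta> t y)" for t \<theta>
  proof -
    have "integrable lborel (\<lambda>y. cnj (h (t - y)))"
      using integrable_refl_shift[of "\<lambda>s. cnj (h s)" t] h by simp
    then have "integrable lborel (\<lambda>y. h t * cnj (h (t - y)))"
      by (rule integrable_mult_right)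
    then show ?thesis unfolding F_def by (rule integrable_iexp_mult)
  qed
  have Fint: "integrable (lborel \<Otimes>\<^sub>M lborel) (\<lambda>(t,y). F \<theta> t y)" for \<theta>
  proof (rule lborel_pair.Fubini_integrable)
    show "integrable lborel (\<lambda>x. \<integral>y. norm (case (x, y) of (t, y) \<Rightarrow> F \<theta> t y) \<partial>lborel)"
      using nh by (simp add: inner_norm)
    show "AE x in lborel. integrable lborel (\<lambda>y. case (x, y) of (t, y) \<Rightarrow> F \<theta> t y)"
      using integ2 by simp
  qed (rule Fm)
  have "integrable lborel (\<lambda>y. \<integral>t. F 0 t y \<partial>lborel)"
    by (rule lborel_pair.integrable_snd[OF Fint])
  moreover have "Rac h = (\<lambda>y. \<integral>t. F 0 t y \<partial>lborel)"
    unfolding Rac_def F_def by (rule ext) simp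
  ultimately show "integrable lborel (Rac h)" by simp
  have inner: "(\<integral>y. cnj (h (t - y)) * iexp (\<theta> * y) \<partial>lborel) = iexp (\<theta> * t) * cnj (FTc h \<theta>)" for t
  proof -
    have "(\<integral>y. cnj (h (t - y)) * iexp (\<theta> * y) \<partial>lborel) =
        (\<integral>s. cnj (h s) * iexp (\<theta> * (t - s)) \<partial>lborel)"
      using integral_refl_shift[of "\<lambda>s. cnj (h s) * iexp (\<theta> * (t - s))" t] by simp
    also have "\<dots> = (\<integral>s. iexp (\<theta> * t) * cnj (h s * iexp (\<theta> * s)) \<partial>lborel)"
      by (rule Bochner_Integration.integral_cong) (auto simp: right_diff_distrib iexp_diff simp del: of_real_diff of_real_mult)
    also have "\<dots> = iexp (\<theta> * t) * (\<integral>s. cnj (h s * iexp (\<theta> * s)) \<partial>lborel)"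
      by (rule integral_mult_right_zero)
    also have "\<dots> = iexp (\<theta> * t) * cnj (FTc h \<theta>)"
      unfolding FTc_def Bochner_Integration.integral_cnj ..
    finally show ?thesis .
  qed
  have "FTc (Rac h) \<theta> = (\<integral>y. \<integral>t. F \<theta> t y \<partial>lborel \<partial>lborel)"
    unfolding FTc_def Rac_def F_def by simp
  also have "\<dots> = (\<integral>t. \<integral>y. F \<theta> t y \<partial>lborel \<partial>lborel)"
    by (rule lborel_pair.Fubini_integral[OF Fint])
  also have "\<dots> = (\<integral>t. h t * (\<integral>y. cnj (h (t - y)) * iexp (\<theta> * y) \<partial>lborel) \<partial>lborel)"
    unfolding F_def by (simp add: mult.assoc)
  also have "\<dots> = (\<integral>t. h t * iexp (\<theta> * t) * cnj (FTc h \<theta>) \<partial>lborel)"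
    by (simp only: inner mult.assoc)
  also have "\<dots> = FTc h \<theta> * cnj (FTc h \<theta>)"
    unfolding FTc_def by simp
  finally show "FTc (Rac h) \<theta> = FTc h \<theta> * cnj (FTc h \<theta>)" .
qed

lemma U_cplx:
  fixes u :: "real \<Rightarrow> complex"
  assumes int: "integrable lborel u" and ft: "\<And>\<theta>. FTc u \<theta> = 0"
  shows "AE t in lborel. u t = 0"
proof -
  have [measurable]: "u \<in> borel_measurable borel" using int by auto
  have ic: "integrable lborel (\<lambda>t. cnj (u t))" using int by simp
  have ftc: "(CLINT t|lborel. cnj (u t) * iexp (\<theta> * t)) = 0" for \<theta>
  proof -
    have "(CLINT t|lborel. cnj (u t) * iexp (\<theta> * t)) = (CLINT t|lborel. cnj (u t * iexp ((-\<theta>) * t)))"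
      by (rule Bochner_Integration.integral_cong) (rule refl, simp only: mult_minus_left iexp_neg complex_cnj_mult complex_cnj_cnj)
    also have "\<dots> = cnj (FTc u (-\<theta>))" unfolding FTc_def Bochner_Integration.integral_cnj ..
    finally show ?thesis using ft by simp
  qed
  have ftu: "(CLINT t|lborel. u t * iexp (\<theta> * t)) = 0" for \<theta> using ft[of \<theta>] unfolding FTc_def .
  have re: "AE t in lborel. Re (u t) = 0"
  proof (rule U_real)
    show "integrable lborel (\<lambda>t. Re (u t))" using int by simp
    fix \<theta>
    have "(CLINT t|lborel. complex_of_real (Re (u t)) * iexp (\<theta> * t)) =
       (CLINT t|lborel. (u t * iexp (\<theta> * t) + cnj (u t) * iexp (\<theta> * t)) / 2)"
      by (rule Bochner_Integration.integral_cong) (simp_all add: complex_eq_iff field_simps)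
    also have "\<dots> = ((CLINT t|lborel. u t * iexp (\<theta> * t)) + (CLINT t|lborel. cnj (u t) * iexp (\<theta> * t))) / 2"
      by (simp only: integral_divide_zero Bochner_Integration.integral_add[OF integrable_iexp_mult[OF int] integrable_iexp_mult[OF ic]])
    also have "\<dots> = 0" by (simp only: ftu ftc) simp
    finally show "(CLINT t|lborel. complex_of_real (Re (u t)) * iexp (\<theta> * t)) = 0" .
  qed
  have im: "AE t in lborel. Im (u t) = 0"
  proof (rule U_real)
    show "integrable lborel (\<lambda>t. Im (u t))" using int by simp
    fix \<theta>
    have "(CLINT t|lborel. complex_of_real (Im (u t)) * iexp (\<theta> * t)) =
       (CLINT t|lborel. (u t * iexp (\<theta> * t) - cnj (u t) * iexp (\<theta> * t)) / (2 * \<i>))"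
      by (rule Bochner_Integration.integral_cong) (rule refl, simp only: im_eq diff_divide_distrib times_divide_eq_left left_diff_distrib)
    also have "\<dots> = ((CLINT t|lborel. u t * iexp (\<theta> * t)) - (CLINT t|lborel. cnj (u t) * iexp (\<theta> * t))) / (2 * \<i>)"
      by (simp only: integral_divide_zero Bochner_Integration.integral_diff[OF integrable_iexp_mult[OF int] integrable_iexp_mult[OF ic]])
    also have "\<dots> = 0" by (simp only: ftu ftc) simp
    finally show "(CLINT t|lborel. complex_of_real (Im (u t)) * iexp (\<theta> * t)) = 0" .
  qed
  from re im show ?thesis by eventually_elim (simp add: complex_eq_iff)
qed

lemma L2_meas: "a \<in> L2 \<Longrightarrow> a \<in> borel_measurable borel" unfolding L2_def by auto

lemma L2_prod:
  fixes a b :: "real \<Rightarrow> complex"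
  assumes "a \<in> L2" "b \<in> L2"
  shows "integrable lborel (\<lambda>t. a t * b t)"
proof -
  have [measurable]: "a \<in> borel_measurable borel" "b \<in> borel_measurable borel" using assms L2_meas by auto
  have i: "integrable lborel (\<lambda>t. (norm (a t))\<^sup>2 + (norm (b t))\<^sup>2)"
    using assms unfolding L2_def by auto
  show ?thesis
  proof (rule Bochner_Integration.integrable_bound[OF i])
    show "(\<lambda>t. a t * b t) \<in> borel_measurable lborel" by measurable
    show "AE x in lborel. norm (a x * b x) \<le> norm ((norm (a x))\<^sup>2 + (norm (b x))\<^sup>2)"
    proof (rule AE_I2)
      fix x
      have "norm (a x * b x) = norm (a x) * norm (b x)" by (simp add: norm_mult)
      also have "\<dots> \<le> (norm (a x))\<^sup>2 + (norm (b x))\<^sup>2"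
      proof -
        have "0 \<le> norm (a x) * norm (b x)" by simp
        moreover have "2 * norm (a x) * norm (b x) \<le> (norm (a x))\<^sup>2 + (norm (b x))\<^sup>2"
          by (rule sum_squares_bound)
        ultimately show ?thesis by linarith
      qed
      finally show "norm (a x * b x) \<le> norm ((norm (a x))\<^sup>2 + (norm (b x))\<^sup>2)" by simp
    qed
  qed
qed

lemma L2_shift: "a \<in> L2 \<Longrightarrow> (\<lambda>t. a (t - x)) \<in> L2"
  unfolding L2_def using integrable_shift[of "\<lambda>t. (norm (a t))\<^sup>2" x] by auto

lemma L2_refl_shift: "a \<in> L2 \<Longrightarrow> (\<lambda>t. a (x - t)) \<in> L2"
  unfolding L2_def using integrable_refl_shift[of "\<lambda>t. (norm (a t))\<^sup>2" x] by auto

lemma L2_cnj: "a \<in> L2 \<Longrightarrow> (\<lambda>t. cnj (a t)) \<in> L2"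
  unfolding L2_def by auto

lemma STFT_FT: "STFT \<phi> f x \<omega> = FTc (\<lambda>t. f t * cnj (\<phi> (t - x))) (-2*pi*\<omega>)"
  unfolding STFT_def FTc_def
  by (rule Bochner_Integration.integral_cong) (simp_all add: algebra_simps)

lemma FTc_diff: "integrable lborel u \<Longrightarrow> integrable lborel v \<Longrightarrow> FTc (\<lambda>t. u t - v t) \<theta> = FTc u \<theta> - FTc v \<theta>"
  unfolding FTc_def
  by (simp only: left_diff_distrib Bochner_Integration.integral_diff[OF integrable_iexp_mult integrable_iexp_mult])

lemma stepA:
  assumes f: "f \<in> L2" and g: "g \<in> L2" and phi: "\<phi> \<in> L2"
    and eq: "\<And>\<omega>. norm (STFT \<phi> f x \<omega>) = norm (STFT \<phi> g x \<omega>)"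
  shows "AE y in lborel. Rac (\<lambda>t. f t * cnj (\<phi> (t - x))) y = Rac (\<lambda>t. g t * cnj (\<phi> (t - x))) y"
proof -
  define h where "h = (\<lambda>t. f t * cnj (\<phi> (t - x)))"
  define k where "k = (\<lambda>t. g t * cnj (\<phi> (t - x)))"
  have ih: "integrable lborel h" unfolding h_def by (rule L2_prod[OF f L2_cnj[OF L2_shift[OF phi]]])
  have ik: "integrable lborel k" unfolding k_def by (rule L2_prod[OF g L2_cnj[OF L2_shift[OF phi]]])
  have n: "norm (FTc h \<theta>) = norm (FTc k \<theta>)" for \<theta>
    using eq[of "- \<theta> / (2*pi)"] unfolding STFT_FT h_def k_def by simp
  have "FTc (\<lambda>y. Rac h y - Rac k y) \<theta> = 0" for \<theta>
  proof -
    have "FTc (\<lambda>y. Rac h y - Rac k y) \<theta> = FTc (Rac h) \<theta> - FTc (Rac k) \<theta>"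
      by (rule FTc_diff[OF AC(1)[OF ih] AC(1)[OF ik]])
    also have "\<dots> = complex_of_real ((norm (FTc h \<theta>))\<^sup>2) - complex_of_real ((norm (FTc k \<theta>))\<^sup>2)"
      unfolding AC(2)[OF ih] AC(2)[OF ik] complex_norm_square ..
    finally show ?thesis by (simp add: n)
  qed
  then have "AE y in lborel. Rac h y - Rac k y = 0"
    by (intro U_cplx Bochner_Integration.integrable_diff AC(1) ih ik)
  then show ?thesis unfolding h_def k_def by auto
qed

lemma L2_real_meas: "(\<lambda>t. complex_of_real (f t)) \<in> L2 \<Longrightarrow> f \<in> borel_measurable borel"
proof -
  assume "(\<lambda>t. complex_of_real (f t)) \<in> L2"
  then have [measurable]: "(\<lambda>t. complex_of_real (f t)) \<in> borel_measurable borel" by (rule L2_meas)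
  have "(\<lambda>t. Re (complex_of_real (f t))) \<in> borel_measurable borel" by measurable
  then show ?thesis by simp
qed

lemma L2_real_prod:
  assumes "(\<lambda>t. complex_of_real (f t)) \<in> L2" "(\<lambda>t. complex_of_real (g t)) \<in> L2"
  shows "integrable lborel (\<lambda>t. f t * g t)"
proof -
  have "integrable lborel (\<lambda>t. Re (complex_of_real (f t) * complex_of_real (g t)))"
    using L2_prod[OF assms] by (rule integrable_Re)
  then show ?thesis by simp
qed

lemma B1:
  assumes fL: "(\<lambda>t. complex_of_real (f t)) \<in> L2" and phi: "\<phi> \<in> L2"
  shows "(\<integral>x. Rac (\<lambda>t. complex_of_real (f t) * cnj (\<phi> (t - x))) y \<partial>lborel) =
    complex_of_real (\<integral>t. f t * f (t - y) \<partial>lborel) * cnj (\<integral>s. \<phi> s * cnj (\<phi> (s - y)) \<partial>lborel)"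
proof -
  have [measurable]: "f \<in> borel_measurable borel" by (rule L2_real_meas[OF fL])
  have [measurable]: "\<phi> \<in> borel_measurable borel" by (rule L2_meas[OF phi])
  define G where "G = (\<lambda>t x. complex_of_real (f t * f (t - y)) * (cnj (\<phi> (t - x)) * \<phi> (t - x - y)))"
  define N where "N = (\<integral>s. norm (cnj (\<phi> s) * \<phi> (s - y)) \<partial>lborel)"
  define K where "K = (\<integral>s. cnj (\<phi> s) * \<phi> (s - y) \<partial>lborel)"
  have Gm: "(\<lambda>(t,x). G t x) \<in> borel_measurable (lborel \<Otimes>\<^sub>M lborel)" unfolding G_def by measurable
  have ffi: "integrable lborel (\<lambda>t. f t * f (t - y))"
    by (rule L2_real_prod[OF fL]) (use L2_shift[OF fL] in simp)
  have pp: "integrable lborel (\<lambda>s. cnj (\<phi> s) * \<phi> (s - y))"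
    by (rule L2_prod[OF L2_cnj[OF phi] L2_shift[OF phi]])
  have inner_norm: "(\<integral>x. norm (G t x) \<partial>lborel) = \<bar>f t * f (t - y)\<bar> * N" for t
  proof -
    have "(\<integral>x. norm (G t x) \<partial>lborel) = (\<integral>x. \<bar>f t * f (t - y)\<bar> * norm (cnj (\<phi> (t - x)) * \<phi> (t - x - y)) \<partial>lborel)"
      unfolding G_def by (simp only: norm_mult norm_of_real)
    also have "\<dots> = \<bar>f t * f (t - y)\<bar> * (\<integral>x. norm (cnj (\<phi> (t - x)) * \<phi> (t - x - y)) \<partial>lborel)"
      by (rule integral_mult_right_zero)
    also have "(\<integral>x. norm (cnj (\<phi> (t - x)) * \<phi> (t - x - y)) \<partial>lborel) = N"
      unfolding N_def by (rule integral_refl_shift[of "\<lambda>s. norm (cnj (\<phi> s) * \<phi> (s - y))" t])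
    finally show ?thesis .
  qed
  have integ2: "integrable lborel (\<lambda>x. G t x)" for t
  proof -
    have "integrable lborel (\<lambda>x. cnj (\<phi> (t - x)) * \<phi> (t - x - y))"
      using integrable_refl_shift[of "\<lambda>s. cnj (\<phi> s) * \<phi> (s - y)" t] pp by simp
    then show ?thesis unfolding G_def by (rule integrable_mult_right)
  qed
  have Gint: "integrable (lborel \<Otimes>\<^sub>M lborel) (\<lambda>(t,x). G t x)"
  proof (rule lborel_pair.Fubini_integrable)
    show "integrable lborel (\<lambda>t. \<integral>x. norm (case (t, x) of (t, x) \<Rightarrow> G t x) \<partial>lborel)"
      using ffi by (simp add: inner_norm)
    show "AE t in lborel. integrable lborel (\<lambda>x. case (t, x) of (t, x) \<Rightarrow> G t x)"
      using integ2 by simp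
  qed (rule Gm)
  have inner: "(\<integral>x. G t x \<partial>lborel) = complex_of_real (f t * f (t - y)) * K" for t
  proof -
    have "(\<integral>x. G t x \<partial>lborel) = complex_of_real (f t * f (t - y)) * (\<integral>x. cnj (\<phi> (t - x)) * \<phi> (t - x - y) \<partial>lborel)"
      unfolding G_def by (rule integral_mult_right_zero)
    also have "(\<integral>x. cnj (\<phi> (t - x)) * \<phi> (t - x - y) \<partial>lborel) = K"
      unfolding K_def by (rule integral_refl_shift[of "\<lambda>s. cnj (\<phi> s) * \<phi> (s - y)" t])
    finally show ?thesis .
  qed
  have "(\<integral>x. Rac (\<lambda>t. complex_of_real (f t) * cnj (\<phi> (t - x))) y \<partial>lborel) = (\<integral>x. \<integral>t. G t x \<partial>lborel \<partial>lborel)"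
    unfolding Rac_def G_def
    by (intro Bochner_Integration.integral_cong refl) (simp add: algebra_simps)
  also have "\<dots> = (\<integral>t. \<integral>x. G t x \<partial>lborel \<partial>lborel)"
    by (rule lborel_pair.Fubini_integral[OF Gint])
  also have "\<dots> = (\<integral>t. complex_of_real (f t * f (t - y)) * K \<partial>lborel)"
    by (simp only: inner)
  also have "\<dots> = complex_of_real (\<integral>t. f t * f (t - y) \<partial>lborel) * K"
    by (simp only: integral_mult_left_zero integral_complex_of_real)
  also have "K = cnj (\<integral>s. \<phi> s * cnj (\<phi> (s - y)) \<partial>lborel)"
    unfolding K_def Bochner_Integration.integral_cnj[symmetric] by simp
  finally show ?thesis .
qed

lemma stepB:
  assumes fL: "(\<lambda>t. complex_of_real (f t)) \<in> L2" and gL: "(\<lambda>t. complex_of_real (g t)) \<in> L2"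
    and phi: "\<phi> \<in> L2"
    and eq: "\<And>x \<omega>. norm (STFT \<phi> (\<lambda>t. complex_of_real (f t)) x \<omega>) = norm (STFT \<phi> (\<lambda>t. complex_of_real (g t)) x \<omega>)"
  shows "AE y in lborel. complex_of_real (\<integral>t. f t * f (t - y) \<partial>lborel) * cnj (\<integral>s. \<phi> s * cnj (\<phi> (s - y)) \<partial>lborel)
     = complex_of_real (\<integral>t. g t * g (t - y) \<partial>lborel) * cnj (\<integral>s. \<phi> s * cnj (\<phi> (s - y)) \<partial>lborel)"
proof -
  have [measurable]: "f \<in> borel_measurable borel" by (rule L2_real_meas[OF fL])
  have [measurable]: "g \<in> borel_measurable borel" by (rule L2_real_meas[OF gL])
  have [measurable]: "\<phi> \<in> borel_measurable borel" by (rule L2_meas[OF phi])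
  define Rf where "Rf = (\<lambda>x y. Rac (\<lambda>t. complex_of_real (f t) * cnj (\<phi> (t - x))) y)"
  define Rg where "Rg = (\<lambda>x y. Rac (\<lambda>t. complex_of_real (g t) * cnj (\<phi> (t - x))) y)"
  have mf[measurable]: "(\<lambda>p. Rf (fst p) (snd p)) \<in> borel_measurable (lborel \<Otimes>\<^sub>M lborel)"
    unfolding Rf_def Rac_def by measurable
  have mg[measurable]: "(\<lambda>p. Rg (fst p) (snd p)) \<in> borel_measurable (lborel \<Otimes>\<^sub>M lborel)"
    unfolding Rg_def Rac_def by measurable
  have "\<forall>x. AE y in lborel. Rf x y = Rg x y"
    unfolding Rf_def Rg_def using stepA[OF fL gL phi eq] by blast
  then have "AE x in lborel. AE y in lborel. Rf x y = Rg x y" by simp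
  then have ae: "AE y in lborel. AE x in lborel. Rf x y = Rg x y"
    by (subst (asm) lborel_pair.AE_commute) measurable
  show ?thesis using ae
  proof eventually_elim
    case (elim y)
    have mfy: "(\<lambda>x. Rf x y) \<in> borel_measurable lborel" unfolding Rf_def Rac_def by measurable
    have mgy: "(\<lambda>x. Rg x y) \<in> borel_measurable lborel" unfolding Rg_def Rac_def by measurable
    have "(\<integral>x. Rf x y \<partial>lborel) = (\<integral>x. Rg x y \<partial>lborel)"
      by (rule integral_cong_AE[OF mfy mgy elim])
    then show ?case unfolding Rf_def Rg_def B1[OF fL phi] B1[OF gL phi] .
  qed
qed

definition mom :: "(real \<Rightarrow> real) \<Rightarrow> nat \<Rightarrow> real" where
  "mom u n = (\<integral>t. u t * t ^ n \<partial>lborel)"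

definition Cv :: "(real \<Rightarrow> real) \<Rightarrow> real \<Rightarrow> real" where
  "Cv u y = (\<integral>t. u t * u (t - y) \<partial>lborel)"

lemma supp_integrable:
  fixes u :: "real \<Rightarrow> real"
  assumes u: "integrable lborel u" and s: "\<And>t. B < \<bar>t\<bar> \<Longrightarrow> u t = 0"
  shows "integrable lborel (\<lambda>t. u t * t ^ n)"
proof -
  have [measurable]: "u \<in> borel_measurable borel" using u by auto
  show ?thesis
  proof (rule Bochner_Integration.integrable_bound)
    show "integrable lborel (\<lambda>t. \<bar>B\<bar> ^ n * \<bar>u t\<bar>)" using u by auto
    show "(\<lambda>t. u t * t ^ n) \<in> borel_measurable lborel" by measurable
    show "AE t in lborel. norm (u t * t ^ n) \<le> norm (\<bar>B\<bar> ^ n * \<bar>u t\<bar>)"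
    proof (rule AE_I2)
      fix t
      show "norm (u t * t ^ n) \<le> norm (\<bar>B\<bar> ^ n * \<bar>u t\<bar>)"
      proof (cases "B < \<bar>t\<bar>")
        case True then show ?thesis using s by simp
      next
        case False
        then have "\<bar>t\<bar> ^ n \<le> \<bar>B\<bar> ^ n" by (intro power_mono) auto
        then show ?thesis by (simp add: abs_mult power_abs mult.commute mult_left_mono)
      qed
    qed
  qed
qed

lemma mom_Cv:
  fixes f :: "real \<Rightarrow> real"
  assumes fi: "integrable lborel f" and s: "\<And>t. B < \<bar>t\<bar> \<Longrightarrow> f t = 0"
    and ev: "\<And>t. f (- t) = f t"
  shows "mom (Cv f) n = (\<Sum>k\<le>n. real (n choose k) * mom f k * mom f (n - k))"
proof -
  have [measurable]: "f \<in> borel_measurable borel" using fi by auto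
  define F where "F = (\<lambda>t y. f t * f (y - t) * y ^ n)"
  define H where "H = (\<lambda>t y. (2 * \<bar>B\<bar>) ^ n * (\<bar>f t\<bar> * \<bar>f (y - t)\<bar>))"
  have Hm: "(\<lambda>(t,y). H t y) \<in> borel_measurable (lborel \<Otimes>\<^sub>M lborel)" unfolding H_def by measurable
  have Fm: "(\<lambda>(t,y). F t y) \<in> borel_measurable (lborel \<Otimes>\<^sub>M lborel)" unfolding F_def by measurable
  have nf: "integrable lborel (\<lambda>t. \<bar>f t\<bar>)" using fi by auto
  have Hi2: "integrable lborel (\<lambda>y. H t y)" for t
  proof -
    have "integrable lborel (\<lambda>y. \<bar>f (y - t)\<bar>)" using integrable_shift[of "\<lambda>s. \<bar>f s\<bar>" t] nf by simp
    then show ?thesis unfolding H_def by (intro integrable_mult_right)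
  qed
  have Hn: "(\<integral>y. \<bar>H t y\<bar> \<partial>lborel) = (2 * \<bar>B\<bar>) ^ n * (\<bar>f t\<bar> * (\<integral>s. \<bar>f s\<bar> \<partial>lborel))" for t
  proof -
    have "(\<integral>y. \<bar>H t y\<bar> \<partial>lborel) = (\<integral>y. (2 * \<bar>B\<bar>) ^ n * (\<bar>f t\<bar> * \<bar>f (y - t)\<bar>) \<partial>lborel)"
      unfolding H_def by (intro Bochner_Integration.integral_cong refl) (simp add: abs_mult)
    also have "\<dots> = (2 * \<bar>B\<bar>) ^ n * (\<bar>f t\<bar> * (\<integral>y. \<bar>f (y - t)\<bar> \<partial>lborel))" by simp
    also have "(\<integral>y. \<bar>f (y - t)\<bar> \<partial>lborel) = (\<integral>s. \<bar>f s\<bar> \<partial>lborel)"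
      by (rule integral_shift[of "\<lambda>s. \<bar>f s\<bar>"])
    finally show ?thesis .
  qed
  have Hint: "integrable (lborel \<Otimes>\<^sub>M lborel) (\<lambda>(t,y). H t y)"
  proof (rule lborel_pair.Fubini_integrable)
    show "integrable lborel (\<lambda>t. \<integral>y. norm (case (t, y) of (t, y) \<Rightarrow> H t y) \<partial>lborel)"
      using nf by (simp add: Hn)
    show "AE t in lborel. integrable lborel (\<lambda>y. case (t, y) of (t, y) \<Rightarrow> H t y)"
      using Hi2 by simp
  qed (rule Hm)
  have bnd: "norm (F t y) \<le> norm (H t y)" for t y
  proof (cases "f t = 0 \<or> f (y - t) = 0")
    case True then show ?thesis unfolding F_def H_def by auto
  next
    case False
    then have "\<bar>t\<bar> \<le> B" "\<bar>y - t\<bar> \<le> B" using s by (auto simp: not_less[symmetric])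
    then have "\<bar>y\<bar> \<le> 2 * \<bar>B\<bar>" by linarith
    then have "\<bar>y\<bar> ^ n \<le> (2 * \<bar>B\<bar>) ^ n" by (intro power_mono) auto
    have "norm (F t y) = (\<bar>f t\<bar> * \<bar>f (y - t)\<bar>) * \<bar>y\<bar> ^ n"
      by (simp add: F_def abs_mult power_abs)
    also have "\<dots> \<le> (\<bar>f t\<bar> * \<bar>f (y - t)\<bar>) * (2 * \<bar>B\<bar>) ^ n"
      using \<open>\<bar>y\<bar> ^ n \<le> (2 * \<bar>B\<bar>) ^ n\<close> by (intro mult_left_mono) auto
    also have "\<dots> = norm (H t y)" by (simp add: H_def abs_mult mult_ac)
    finally show ?thesis .
  qed
  have Fint: "integrable (lborel \<Otimes>\<^sub>M lborel) (\<lambda>(t,y). F t y)"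
    by (rule Bochner_Integration.integrable_bound[OF Hint]) (use Fm bnd in auto)
  have tf: "integrable lborel (\<lambda>t. f t * t ^ k)" for k by (rule supp_integrable[OF fi s])
  have inner: "(\<integral>y. F t y \<partial>lborel) = (\<Sum>k\<le>n. real (n choose k) * mom f k * (f t * t ^ (n - k)))" for t
  proof -
    have "(\<integral>y. F t y \<partial>lborel) = f t * (\<integral>y. f (y - t) * y ^ n \<partial>lborel)"
      unfolding F_def by (simp add: mult.assoc)
    also have "(\<integral>y. f (y - t) * y ^ n \<partial>lborel) = (\<integral>s. f s * (s + t) ^ n \<partial>lborel)"
      using integral_shift[of "\<lambda>s. f s * (s + t) ^ n" t] by simp
    also have "\<dots> = (\<integral>s. (\<Sum>k\<le>n. real (n choose k) * t ^ (n - k) * (f s * s ^ k)) \<partial>lborel)"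
      by (intro Bochner_Integration.integral_cong refl) (simp add: binomial_ring sum_distrib_left mult_ac)
    also have "\<dots> = (\<Sum>k\<le>n. real (n choose k) * t ^ (n - k) * mom f k)"
      unfolding mom_def by (subst Bochner_Integration.integral_sum) (auto intro: tf)
    finally show ?thesis by (simp add: sum_distrib_left mult_ac)
  qed
  have "mom (Cv f) n = (\<integral>y. \<integral>t. F t y \<partial>lborel \<partial>lborel)"
  proof -
    have "Cv f y = (\<integral>t. f t * f (y - t) \<partial>lborel)" for y
      unfolding Cv_def using ev[of "y - _"] by (intro Bochner_Integration.integral_cong refl) simp
    then show ?thesis unfolding mom_def F_def by simp
  qed
  also have "\<dots> = (\<integral>t. \<integral>y. F t y \<partial>lborel \<partial>lborel)"
    by (rule lborel_pair.Fubini_integral[OF Fint])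
  also have "\<dots> = (\<integral>t. (\<Sum>k\<le>n. real (n choose k) * mom f k * (f t * t ^ (n - k))) \<partial>lborel)"
    by (simp only: inner)
  also have "\<dots> = (\<Sum>k\<le>n. real (n choose k) * mom f k * mom f (n - k))"
    unfolding mom_def[of f "_ - _"] by (subst Bochner_Integration.integral_sum) (auto intro: tf)
  finally show ?thesis .
qed

definition Ef :: "(real \<Rightarrow> real) \<Rightarrow> real fps" where
  "Ef u = Abs_fps (\<lambda>n. mom u n / fact n)"

lemma Ef_Cv:
  fixes f :: "real \<Rightarrow> real"
  assumes fi: "integrable lborel f" and s: "\<And>t. B < \<bar>t\<bar> \<Longrightarrow> f t = 0"
    and ev: "\<And>t. f (- t) = f t"
  shows "Ef (Cv f) = Ef f * Ef f"
proof (rule fps_ext)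
  fix n
  have "fps_nth (Ef (Cv f)) n = (\<Sum>k\<le>n. real (n choose k) * mom f k * mom f (n - k)) / fact n"
    unfolding Ef_def by (simp add: mom_Cv[of f B, OF fi s ev])
  also have "\<dots> = (\<Sum>k\<le>n. mom f k / fact k * (mom f (n - k) / fact (n - k)))"
    unfolding sum_divide_distrib
  proof (rule sum.cong[OF refl])
    fix k assume "k \<in> {..n}"
    then have "k \<le> n" by simp
    then show "real (n choose k) * mom f k * mom f (n - k) / fact n = mom f k / fact k * (mom f (n - k) / fact (n - k))"
      by (simp add: binomial_fact)
  qed
  also have "\<dots> = fps_nth (Ef f * Ef f) n"
    unfolding fps_mult_nth Ef_def by (simp add: atLeast0AtMost)
  finally show "fps_nth (Ef (Cv f)) n = fps_nth (Ef f * Ef f) n" .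
qed

lemma supp_bound_int:
  fixes u :: "real \<Rightarrow> real"
  assumes u: "integrable lborel u" and s: "\<And>t. B < \<bar>t\<bar> \<Longrightarrow> u t = 0"
  shows "(\<integral>t. \<bar>u t\<bar> * \<bar>t\<bar> ^ n \<partial>lborel) \<le> \<bar>B\<bar> ^ n * (\<integral>t. \<bar>u t\<bar> \<partial>lborel)"
proof -
  have "(\<integral>t. \<bar>u t\<bar> * \<bar>t\<bar> ^ n \<partial>lborel) \<le> (\<integral>t. \<bar>B\<bar> ^ n * \<bar>u t\<bar> \<partial>lborel)"
  proof (rule integral_mono)
    show "integrable lborel (\<lambda>t. \<bar>u t\<bar> * \<bar>t\<bar> ^ n)"
      using supp_integrable[of u B n, OF u s] by (simp add: abs_mult[symmetric] power_abs[symmetric])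
    show "integrable lborel (\<lambda>t. \<bar>B\<bar> ^ n * \<bar>u t\<bar>)" using u by auto
    fix t
    show "\<bar>u t\<bar> * \<bar>t\<bar> ^ n \<le> \<bar>B\<bar> ^ n * \<bar>u t\<bar>"
    proof (cases "B < \<bar>t\<bar>")
      case True then show ?thesis using s by simp
    next
      case False
      then have "\<bar>t\<bar> ^ n \<le> \<bar>B\<bar> ^ n" by (intro power_mono) auto
      then show ?thesis by (simp add: mult.commute mult_left_mono)
    qed
  qed
  then show ?thesis by simp
qed

lemma moments_zero:
  fixes u :: "real \<Rightarrow> real"
  assumes u: "integrable lborel u" and s: "\<And>t. B < \<bar>t\<bar> \<Longrightarrow> u t = 0"
    and m: "\<And>n. mom u n = 0"
  shows "AE t in lborel. u t = 0"
proof -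
  have [measurable]: "u \<in> borel_measurable borel" using u by auto
  have "AE t in lborel. complex_of_real (u t) = 0"
  proof (rule U_cplx)
    show "integrable lborel (\<lambda>t. complex_of_real (u t))" using u by simp
    fix \<theta>
    define T where "T = (\<lambda>n t. complex_of_real (u t * t ^ n) * ((\<i> * complex_of_real \<theta>) ^ n / fact n))"
    have Ts: "(\<lambda>n. T n t) sums (complex_of_real (u t) * iexp (\<theta> * t))" for t
    proof -
      have "(\<lambda>n. complex_of_real (u t) * ((\<i> * complex_of_real (\<theta> * t)) ^ n /\<^sub>R fact n)) sums (complex_of_real (u t) * iexp (\<theta> * t))"
        by (intro sums_mult exp_converges)
      then show ?thesis unfolding T_def
        by (simp add: scaleR_conv_of_real power_mult_distrib field_simps)
    qed
    have Ti: "integrable lborel (T n)" for n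
    proof -
      have "integrable lborel (\<lambda>t. complex_of_real (u t * t ^ n))"
        by (rule integrable_of_real[OF supp_integrable[of u B n, OF u s]])
      then show ?thesis unfolding T_def by (rule integrable_mult_left)
    qed
    have Tn: "norm (T n t) = \<bar>u t\<bar> * \<bar>t\<bar> ^ n * (\<bar>\<theta>\<bar> ^ n / fact n)" for n t
      unfolding T_def by (simp add: norm_mult norm_power norm_divide abs_mult power_abs)
    have sumnorm: "AE t in lborel. summable (\<lambda>n. norm (T n t))"
    proof (rule AE_I2)
      fix t
      have "summable (\<lambda>n. norm (complex_of_real (u t)) * norm ((\<i> * complex_of_real (\<theta> * t)) ^ n /\<^sub>R fact n))"
        by (intro summable_mult summable_norm_exp)
      then show "summable (\<lambda>n. norm (T n t))"
        by (simp add: Tn norm_mult norm_power norm_divide abs_mult power_abs power_mult_distrib divide_inverse mult_ac)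
    qed
    have sumint: "summable (\<lambda>n. \<integral>t. norm (T n t) \<partial>lborel)"
    proof (rule summable_comparison_test)
      show "summable (\<lambda>n. (\<integral>t. \<bar>u t\<bar> \<partial>lborel) * ((\<bar>B\<bar> * \<bar>\<theta>\<bar>) ^ n / fact n))"
        using summable_exp[of "\<bar>B\<bar> * \<bar>\<theta>\<bar>"] by (intro summable_mult) (simp add: field_simps)
      show "\<exists>N. \<forall>n\<ge>N. norm (\<integral>t. norm (T n t) \<partial>lborel) \<le> (\<integral>t. \<bar>u t\<bar> \<partial>lborel) * ((\<bar>B\<bar> * \<bar>\<theta>\<bar>) ^ n / fact n)"
      proof (intro exI allI impI)
        fix n :: nat
        have eq1: "(\<integral>t. norm (T n t) \<partial>lborel) = (\<integral>t. \<bar>u t\<bar> * \<bar>t\<bar> ^ n \<partial>lborel) * (\<bar>\<theta>\<bar> ^ n / fact n)"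
          by (simp add: Tn)
        have sb: "(\<integral>t. \<bar>u t\<bar> * \<bar>t\<bar> ^ n \<partial>lborel) \<le> \<bar>B\<bar> ^ n * (\<integral>t. \<bar>u t\<bar> \<partial>lborel)"
          by (rule supp_bound_int[of u B n]) (simp_all add: u s)
        have le: "(\<integral>t. \<bar>u t\<bar> * \<bar>t\<bar> ^ n \<partial>lborel) * (\<bar>\<theta>\<bar> ^ n / fact n) \<le> (\<bar>B\<bar> ^ n * (\<integral>t. \<bar>u t\<bar> \<partial>lborel)) * (\<bar>\<theta>\<bar> ^ n / fact n)"
          by (rule mult_right_mono[OF sb]) simp
        have eq2: "(\<bar>B\<bar> ^ n * (\<integral>t. \<bar>u t\<bar> \<partial>lborel)) * (\<bar>\<theta>\<bar> ^ n / fact n) = (\<integral>t. \<bar>u t\<bar> \<partial>lborel) * ((\<bar>B\<bar> * \<bar>\<theta>\<bar>) ^ n / fact n)"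
          by (simp add: power_mult_distrib)
        have nn: "0 \<le> (\<integral>t. norm (T n t) \<partial>lborel)" by (rule integral_nonneg_AE) simp
        show "norm (\<integral>t. norm (T n t) \<partial>lborel) \<le> (\<integral>t. \<bar>u t\<bar> \<partial>lborel) * ((\<bar>B\<bar> * \<bar>\<theta>\<bar>) ^ n / fact n)"
        proof -
          have "norm (\<integral>t. norm (T n t) \<partial>lborel) = (\<integral>t. norm (T n t) \<partial>lborel)" using nn by simp
          then show ?thesis using eq1 le eq2 by linarith
        qed
      qed
    qed
    have "(CLINT t|lborel. complex_of_real (u t) * iexp (\<theta> * t)) = (CLINT t|lborel. (\<Sum>n. T n t))"
      using Ts by (intro Bochner_Integration.integral_cong refl) (simp add: sums_unique)
    also have "\<dots> = (\<Sum>n. integral\<^sup>L lborel (T n))"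
      by (rule integral_suminf[OF Ti sumnorm sumint])
    also have "\<dots> = 0"
    proof -
      have "integral\<^sup>L lborel (T n) = 0" for n
      proof -
        have "integral\<^sup>L lborel (T n) = complex_of_real (mom u n) * ((\<i> * complex_of_real \<theta>) ^ n / fact n)"
          unfolding T_def mom_def by (simp only: integral_mult_left_zero integral_complex_of_real)
        then show ?thesis using m by simp
      qed
      then show ?thesis by simp
    qed
    finally show "FTc (\<lambda>t. complex_of_real (u t)) \<theta> = 0" unfolding FTc_def .
  qed
  then show ?thesis by simp
qed

lemma L2_supp_integrable:
  fixes f :: "real \<Rightarrow> real"
  assumes fL: "(\<lambda>t. complex_of_real (f t)) \<in> L2" and fs: "\<And>t. B < \<bar>t\<bar> \<Longrightarrow> f t = 0"
  shows "integrable lborel f"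
proof -
  have iL: "(\<lambda>t. complex_of_real (indicator {-B..B} t)) \<in> L2"
  proof -
    have "integrable lborel (\<lambda>t. (indicator {-B..B} t :: real))"
      by (rule integrable_real_indicator) (auto simp: emeasure_lborel_Icc_eq)
    moreover have "(\<lambda>t. (norm (complex_of_real (indicator {-B..B} t)))\<^sup>2) = (\<lambda>t. (indicator {-B..B} t :: real))"
      by (auto split: split_indicator)
    ultimately show ?thesis unfolding L2_def by auto
  qed
  have eqf: "(\<lambda>t. f t * indicator {-B..B} t) = f"
  proof
    fix t show "f t * indicator {-B..B} t = f t"
      using fs[of t] by (cases "B < \<bar>t\<bar>") (auto split: split_indicator)
  qed
  show ?thesis using L2_real_prod[OF fL iL] unfolding eqf .
qed

lemma ambiguity_0: "ambiguity \<phi> y 0 = (\<integral>s. \<phi> s * cnj (\<phi> (s - y)) \<partial>lborel)"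
  unfolding ambiguity_def STFT_def by simp

lemma Cv_supp:
  assumes fs: "\<And>t. B < \<bar>t\<bar> \<Longrightarrow> f t = 0" and y: "2 * B < \<bar>y\<bar>"
  shows "Cv f y = 0"
proof -
  have "f t * f (t - y) = 0" for t
  proof (cases "B < \<bar>t\<bar>")
    case True then show ?thesis using fs by simp
  next
    case False
    then have "B < \<bar>t - y\<bar>" using y by linarith
    then show ?thesis using fs by simp
  qed
  then have "(\<lambda>t. f t * f (t - y)) = (\<lambda>t. 0)" by (rule ext)
  then show ?thesis unfolding Cv_def by simp
qed

lemma core:
  fixes B :: real and \<phi> :: "real \<Rightarrow> complex" and f g :: "real \<Rightarrow> real"
  assumes "B > 0" and phi: "\<phi> \<in> L2"
    and amb: "AE x in lborel. x \<in> {-2*B<..<2*B} \<longrightarrow> ambiguity \<phi> x 0 \<noteq> 0"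
    and fL: "(\<lambda>t. complex_of_real (f t)) \<in> L2" and gL: "(\<lambda>t. complex_of_real (g t)) \<in> L2"
    and fe: "\<And>t. f (- t) = f t" and ge: "\<And>t. g (- t) = g t"
    and fs: "\<And>t. B < \<bar>t\<bar> \<Longrightarrow> f t = 0" and gs: "\<And>t. B < \<bar>t\<bar> \<Longrightarrow> g t = 0"
    and eq: "\<And>x \<omega>. norm (STFT \<phi> (\<lambda>t. complex_of_real (f t)) x \<omega>) = norm (STFT \<phi> (\<lambda>t. complex_of_real (g t)) x \<omega>)"
  shows "(AE t in lborel. f t = g t) \<or> (AE t in lborel. f t = - g t)"
proof -
  have [measurable]: "f \<in> borel_measurable borel" by (rule L2_real_meas[OF fL])
  have [measurable]: "g \<in> borel_measurable borel" by (rule L2_real_meas[OF gL])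
  have fi: "integrable lborel f" by (rule L2_supp_integrable[OF fL fs])
  have gi: "integrable lborel g" by (rule L2_supp_integrable[OF gL gs])
  have sB: "AE y in lborel. complex_of_real (Cv f y) * cnj (ambiguity \<phi> y 0) = complex_of_real (Cv g y) * cnj (ambiguity \<phi> y 0)"
    unfolding Cv_def ambiguity_0 by (rule stepB[OF fL gL phi eq])
  have CvAE: "AE y in lborel. Cv f y = Cv g y"
    using sB amb AE_lborel_singleton[of "2*B"] AE_lborel_singleton[of "-2*B"]
  proof eventually_elim
    case (elim y)
    show ?case
    proof (cases "2 * B < \<bar>y\<bar>")
      case True then show ?thesis using Cv_supp[of B f y, OF fs] Cv_supp[of B g y, OF gs] by simp
    next
      case False
      then have "y \<in> {-2*B<..<2*B}" using elim(3,4) by auto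
      then have "cnj (ambiguity \<phi> y 0) \<noteq> 0" using elim(2) by simp
      then show ?thesis using elim(1) by simp
    qed
  qed
  have cvm: "Cv u \<in> borel_measurable lborel" if [measurable]: "u \<in> borel_measurable borel" for u
  proof -
    have "(\<lambda>(y, t). u t * u (t - y)) \<in> borel_measurable (lborel \<Otimes>\<^sub>M lborel)" by measurable
    then have "(\<lambda>y. \<integral>t. u t * u (t - y) \<partial>lborel) \<in> borel_measurable lborel"
      by (rule lborel.borel_measurable_lebesgue_integral)
    then show ?thesis unfolding Cv_def[abs_def] .
  qed
  have cfm[measurable]: "Cv f \<in> borel_measurable borel" using cvm[of f] by simp
  have cgm[measurable]: "Cv g \<in> borel_measurable borel" using cvm[of g] by simp
  have "mom (Cv f) n = mom (Cv g) n" for n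
  proof -
    have m1: "(\<lambda>y. Cv f y * y ^ n) \<in> borel_measurable lborel" by measurable
    have m2: "(\<lambda>y. Cv g y * y ^ n) \<in> borel_measurable lborel" by measurable
    have "AE y in lborel. Cv f y * y ^ n = Cv g y * y ^ n" using CvAE by (rule AE_mp) (intro AE_I2, simp)
    then show ?thesis unfolding mom_def by (rule integral_cong_AE[OF m1 m2])
  qed
  then have EE: "Ef (Cv f) = Ef (Cv g)" unfolding Ef_def by simp
  have e1: "Ef (Cv f) = Ef f * Ef f" by (rule Ef_Cv[of f B, OF fi fs fe])
  have e2: "Ef (Cv g) = Ef g * Ef g" by (rule Ef_Cv[of g B, OF gi gs ge])
  have sq: "Ef f * Ef f = Ef g * Ef g" unfolding e1[symmetric] e2[symmetric] by (rule EE)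
  have "(Ef f + Ef g) * (Ef f - Ef g) = Ef f * Ef f - Ef g * Ef g" by (rule square_diff_square_factored[symmetric])
  then have "(Ef f - Ef g) * (Ef f + Ef g) = 0" using sq by (simp only: mult.commute diff_self)
  then have "Ef f - Ef g = 0 \<or> Ef f + Ef g = 0" by (simp only: mult_eq_0_iff)
  then have "Ef f = Ef g \<or> Ef f = - Ef g" by (simp only: right_minus_eq eq_neg_iff_add_eq_0)
  then show ?thesis
  proof
    assume E: "Ef f = Ef g"
    have "mom f n = mom g n" for n
      using arg_cong[OF E, of "\<lambda>F. fps_nth F n"] unfolding Ef_def by simp
    have "AE t in lborel. f t - g t = 0"
    proof (rule moments_zero[of _ B])
      show "integrable lborel (\<lambda>t. f t - g t)" using fi gi by auto
      show "\<And>t. B < \<bar>t\<bar> \<Longrightarrow> f t - g t = 0" using fs gs by simp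
      fix n
      have "mom (\<lambda>t. f t - g t) n = mom f n - mom g n" unfolding mom_def left_diff_distrib
        by (rule Bochner_Integration.integral_diff) (rule supp_integrable[of _ B], simp_all add: fi gi fs gs)+
      then show "mom (\<lambda>t. f t - g t) n = 0" using \<open>\<And>n. mom f n = mom g n\<close> by simp
    qed
    then show ?thesis by (auto elim!: AE_mp)
  next
    assume E: "Ef f = - Ef g"
    have "mom f n = - mom g n" for n
    proof -
      have "mom f n / fact n = - (mom g n / fact n)"
        using arg_cong[OF E, of "\<lambda>F. fps_nth F n"] unfolding Ef_def by simp
      then have "mom f n / fact n = (- mom g n) / fact n" by simp
      then show ?thesis by (simp only: divide_cancel_right fact_nonzero of_nat_eq_0_iff simp_thms)
    qed
    have "AE t in lborel. f t + g t = 0"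
    proof (rule moments_zero[of _ B])
      show "integrable lborel (\<lambda>t. f t + g t)" using fi gi by auto
      show "\<And>t. B < \<bar>t\<bar> \<Longrightarrow> f t + g t = 0" using fs gs by simp
      fix n
      have "mom (\<lambda>t. f t + g t) n = mom f n + mom g n" unfolding mom_def distrib_right
        by (rule Bochner_Integration.integral_add) (rule supp_integrable[of _ B], simp_all add: fi gi fs gs)+
      then show "mom (\<lambda>t. f t + g t) n = 0" using \<open>\<And>n. mom f n = - mom g n\<close> by simp
    qed
    then have "AE t in lborel. f t = - g t" by (rule AE_mp) (intro AE_I2, simp add: eq_neg_iff_add_eq_0)
    then show ?thesis by simp
  qed
qed

lemma STFT_cong_AE:
  assumes [measurable]: "f \<in> borel_measurable borel" "g \<in> borel_measurable borel" "\<phi> \<in> borel_measurable borel"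
    and ae: "AE t in lborel. f t = g t"
  shows "STFT \<phi> f x \<omega> = STFT \<phi> g x \<omega>"
  unfolding STFT_def
  by (rule integral_cong_AE) (measurable, use ae in \<open>auto elim!: AE_mp\<close>)

lemma realify:
  fixes f :: "real \<Rightarrow> complex" and B :: real and fr :: "real \<Rightarrow> real"
  assumes fL: "f \<in> L2"
    and ev: "AE t in lborel. f (- t) = f t"
    and re: "AE t in lborel. f t \<in> \<real>"
    and sp: "AE t in lborel. t \<notin> {-B..B} \<longrightarrow> f t = 0"
    and fr_def: "fr = (\<lambda>t. if \<bar>t\<bar> \<le> B then (Re (f t) + Re (f (- t))) / 2 else 0)"
  shows "\<And>t. fr (- t) = fr t" "\<And>t. B < \<bar>t\<bar> \<Longrightarrow> fr t = 0"
    "AE t in lborel. f t = complex_of_real (fr t)"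
    "(\<lambda>t. complex_of_real (fr t)) \<in> L2"
    "(\<lambda>t. complex_of_real (fr t)) \<in> borel_measurable borel"
proof -
  have [measurable]: "f \<in> borel_measurable borel" by (rule L2_meas[OF fL])
  show "fr (- t) = fr t" for t unfolding fr_def by (simp add: add.commute)
  show "B < \<bar>t\<bar> \<Longrightarrow> fr t = 0" for t unfolding fr_def by simp
  show ae: "AE t in lborel. f t = complex_of_real (fr t)"
    using ev re sp
  proof eventually_elim
    case (elim t)
    show ?case
    proof (cases "\<bar>t\<bar> \<le> B")
      case True
      then have "fr t = Re (f t)" unfolding fr_def using elim(1) by simp
      moreover have "f t = complex_of_real (Re (f t))" using elim(2) by (simp add: complex_is_Real_iff complex_eq_iff)
      ultimately show ?thesis by simp
    next
      case False
      then show ?thesis using elim(3) unfolding fr_def by auto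
    qed
  qed
  have frm[measurable]: "fr \<in> borel_measurable borel" unfolding fr_def by measurable
  show "(\<lambda>t. complex_of_real (fr t)) \<in> borel_measurable borel" by measurable
  have "integrable lborel (\<lambda>t. (norm (f t))\<^sup>2)" using fL unfolding L2_def by auto
  moreover have "integrable lborel (\<lambda>t. (norm (f t))\<^sup>2) = integrable lborel (\<lambda>t. (norm (complex_of_real (fr t)))\<^sup>2)"
    by (rule integrable_cong_AE) (measurable, use ae in \<open>auto elim!: AE_mp\<close>)
  ultimately show "(\<lambda>t. complex_of_real (fr t)) \<in> L2" unfolding L2_def by auto
qed

theorem mainTheorem5:
  fixes B :: real and \<phi> f g :: "real \<Rightarrow> complex"
  assumes "B > 0"
    and "\<phi> \<in> L2"
    and "AE x in lborel. x \<in> {-2*B<..<2*B} \<longrightarrow> ambiguity \<phi> x 0 \<noteq> 0"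
    and "f \<in> L2" and "g \<in> L2"
    and "AE t in lborel. f (- t) = f t"
    and "AE t in lborel. g (- t) = g t"
    and "AE t in lborel. f t \<in> \<real>"
    and "AE t in lborel. g t \<in> \<real>"
    and "AE t in lborel. t \<notin> {-B..B} \<longrightarrow> f t = 0"
    and "AE t in lborel. t \<notin> {-B..B} \<longrightarrow> g t = 0"
  shows "((AE t in lborel. f t = g t) \<or> (AE t in lborel. f t = - g t))
     \<longleftrightarrow> (\<forall>x \<omega>. norm (STFT \<phi> f x \<omega>) = norm (STFT \<phi> g x \<omega>))"
proof -
  note a = assms
  have [measurable]: "f \<in> borel_measurable borel" by (rule L2_meas[OF a(4)])
  have [measurable]: "g \<in> borel_measurable borel" by (rule L2_meas[OF a(5)])
  have [measurable]: "\<phi> \<in> borel_measurable borel" by (rule L2_meas[OF a(2)])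
  define fr where "fr = (\<lambda>t. if \<bar>t\<bar> \<le> B then (Re (f t) + Re (f (- t))) / 2 else 0)"
  define gr where "gr = (\<lambda>t. if \<bar>t\<bar> \<le> B then (Re (g t) + Re (g (- t))) / 2 else 0)"
  note F = realify[OF a(4) a(6) a(8) a(10) fr_def]
  note G = realify[OF a(5) a(7) a(9) a(11) gr_def]
  have [measurable]: "(\<lambda>t. complex_of_real (fr t)) \<in> borel_measurable borel" by (rule F(5))
  have [measurable]: "(\<lambda>t. complex_of_real (gr t)) \<in> borel_measurable borel" by (rule G(5))
  have Sf: "STFT \<phi> f x \<omega> = STFT \<phi> (\<lambda>t. complex_of_real (fr t)) x \<omega>" for x \<omega>
    by (rule STFT_cong_AE) (measurable, rule F(3))
  have Sg: "STFT \<phi> g x \<omega> = STFT \<phi> (\<lambda>t. complex_of_real (gr t)) x \<omega>" for x \<omega>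
    by (rule STFT_cong_AE) (measurable, rule G(3))
  show ?thesis
  proof
    assume h: "(AE t in lborel. f t = g t) \<or> (AE t in lborel. f t = - g t)"
    show "\<forall>x \<omega>. norm (STFT \<phi> f x \<omega>) = norm (STFT \<phi> g x \<omega>)"
    proof (intro allI)
      fix x \<omega>
      from h show "norm (STFT \<phi> f x \<omega>) = norm (STFT \<phi> g x \<omega>)"
      proof
        assume "AE t in lborel. f t = g t"
        then show ?thesis by (subst STFT_cong_AE[of f g]) auto
      next
        assume ae: "AE t in lborel. f t = - g t"
        have "STFT \<phi> f x \<omega> = STFT \<phi> (\<lambda>t. - g t) x \<omega>"
          by (rule STFT_cong_AE) (measurable, rule ae)
        also have "\<dots> = - STFT \<phi> g x \<omega>" unfolding STFT_def by simp
        finally show ?thesis by simp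
      qed
    qed
  next
    assume h: "\<forall>x \<omega>. norm (STFT \<phi> f x \<omega>) = norm (STFT \<phi> g x \<omega>)"
    have "(AE t in lborel. fr t = gr t) \<or> (AE t in lborel. fr t = - gr t)"
      proof (rule core[OF a(1) a(2) a(3) F(4) G(4) F(1) G(1) F(2) G(2)])
      fix x \<omega>
      show "norm (STFT \<phi> (\<lambda>t. complex_of_real (fr t)) x \<omega>) = norm (STFT \<phi> (\<lambda>t. complex_of_real (gr t)) x \<omega>)"
        using h unfolding Sf Sg by blast
    qed
    then show "(AE t in lborel. f t = g t) \<or> (AE t in lborel. f t = - g t)"
    proof
      assume "AE t in lborel. fr t = gr t"
      with F(3) G(3) have "AE t in lborel. f t = g t" by eventually_elim simp
      then show ?thesis ..
    next
      assume "AE t in lborel. fr t = - gr t"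
      with F(3) G(3) have "AE t in lborel. f t = - g t" by eventually_elim simp
      then show ?thesis ..
    qed
  qed
qed

end
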